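(* Let $\pmb x,\pmb y\in\{0,1\}^n$, $\pmb\delta\in\{0,1\}^n$, $\hat{\pmb c},\pmb d\in\mathbb R^n_{\ge0}$ and an integer $\Gamma'\ge0$ be fixed. Then the balancing problem \[\min\Big\{\sum_{i\in[n]}(\hat c_i+d_i\delta_i+d_i\epsilon_i)(x_i-y_i)\ :\ \sum_{i\in[n]}\epsilon_i\le\Gamma',\ \pmb\epsilon\in\{0,1\}^n\Big\}\] has an optimal solution $\pmb\epsilon$ with $\epsilon_i+x_i\le1$ for all $i\in[n]$.
   Context: $[n]=\{1,\dots,n\}$. *)

theory Defs
  imports Complex_Main
begin

text \<open>Vectors in R^n / {0,1}^n are functions nat => real on the index set [n] = {1..n}.\<close>

definition binvec :: "nat \<Rightarrow> (nat \<Rightarrow> real) \<Rightarrow> bool" where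
  "binvec n v \<longleftrightarrow> (\<forall>i\<in>{1..n}. v i \<in> {0, 1})"

text \<open>Feasible epsilons: binary on [n], zero outside [n] (so they are genuine n-vectors), budget Gamma'.\<close>
definition balancing_feasible :: "nat \<Rightarrow> nat \<Rightarrow> (nat \<Rightarrow> real) \<Rightarrow> bool" where
  "balancing_feasible n \<Gamma>' eps \<longleftrightarrow>
     binvec n eps \<and> (\<forall>i. i \<notin> {1..n} \<longrightarrow> eps i = 0) \<and> (\<Sum>i=1..n. eps i) \<le> real \<Gamma>'"

definition balancing_obj ::
  "nat \<Rightarrow> (nat \<Rightarrow> real) \<Rightarrow> (nat \<Rightarrow> real) \<Rightarrow> (nat \<Rightarrow> real) \<Rightarrow> (nat \<Rightarrow> real) \<Rightarrow> (nat \<Rightarrow> real)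
     \<Rightarrow> (nat \<Rightarrow> real) \<Rightarrow> real" where
  "balancing_obj n c d \<delta> x y eps = (\<Sum>i=1..n. (c i + d i * \<delta> i + d i * eps i) * (x i - y i))"

end

theory Submission
  imports Defs
begin

lemma feas_finite: "finite {eps. balancing_feasible n G eps}"
proof -
  have "{eps. balancing_feasible n G eps} \<subseteq> (\<lambda>S i. if i \<in> S then (1::real) else 0) ` Pow {1..n}"
  proof
    fix e assume "e \<in> {eps. balancing_feasible n G eps}"
    hence b: "binvec n e" and z: "\<forall>i. i \<notin> {1..n} \<longrightarrow> e i = 0"
      by (auto simp: balancing_feasible_def)
    have "e = (\<lambda>i. if i \<in> {i\<in>{1..n}. e i = 1} then 1 else 0)"
    proof
      fix i show "e i = (if i \<in> {i\<in>{1..n}. e i = 1} then 1 else 0)"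
        using b z unfolding binvec_def by (cases "i \<in> {1..n}") auto
    qed
    thus "e \<in> (\<lambda>S i. if i \<in> S then (1::real) else 0) ` Pow {1..n}" by blast
  qed
  thus ?thesis by (rule finite_subset) simp
qed

theorem lemma1:
  fixes n \<Gamma>' :: nat and x y \<delta> c d :: "nat \<Rightarrow> real"
  assumes "binvec n x" and "binvec n y" and "binvec n \<delta>"
    and "\<forall>i\<in>{1..n}. c i \<ge> 0" and "\<forall>i\<in>{1..n}. d i \<ge> 0"
  shows "\<exists>eps. balancing_feasible n \<Gamma>' eps
           \<and> (\<forall>eps'. balancing_feasible n \<Gamma>' eps' \<longrightarrow>
                 balancing_obj n c d \<delta> x y eps \<le> balancing_obj n c d \<delta> x y eps')
           \<and> (\<forall>i\<in>{1..n}. eps i + x i \<le> 1)"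
proof -
  define F where "F = {eps. balancing_feasible n \<Gamma>' eps}"
  define f where "f = balancing_obj n c d \<delta> x y"
  have fin: "finite F" unfolding F_def by (rule feas_finite)
  have "(\<lambda>i. 0) \<in> F" unfolding F_def balancing_feasible_def binvec_def by auto
  hence ne: "F \<noteq> {}" by blast
  have "Min (f ` F) \<in> f ` F" using fin ne by simp
  then obtain e where eF: "e \<in> F" and em: "f e = Min (f ` F)" by auto
  have opt: "\<forall>e'\<in>F. f e \<le> f e'" using em fin by simp
  define e2 where "e2 = (\<lambda>i. e i * (1 - x i))"
  have eb: "binvec n e" and ez: "\<forall>i. i \<notin> {1..n} \<longrightarrow> e i = 0"
    and es: "(\<Sum>i=1..n. e i) \<le> real \<Gamma>'"
    using eF by (auto simp: F_def balancing_feasible_def)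
  have "(\<Sum>i=1..n. e2 i) \<le> (\<Sum>i=1..n. e i)"
  proof (rule sum_mono)
    fix i assume i: "i \<in> {1..n}"
    have "x i \<in> {0,1}" "e i \<in> {0,1}" using i eb assms(1) unfolding binvec_def by auto
    thus "e2 i \<le> e i" unfolding e2_def by auto
  qed
  moreover have "binvec n e2" unfolding binvec_def
  proof
    fix i assume i: "i \<in> {1..n}"
    have "x i \<in> {0,1}" "e i \<in> {0,1}" using i eb assms(1) unfolding binvec_def by auto
    thus "e2 i \<in> {0,1}" unfolding e2_def by auto
  qed
  ultimately have e2F: "e2 \<in> F" using ez es
    by (auto simp: F_def balancing_feasible_def e2_def)
  have "f e2 \<le> f e" unfolding f_def balancing_obj_def
  proof (rule sum_mono)
    fix i assume i: "i \<in> {1..n}"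
    have "x i \<in> {0,1}" "y i \<in> {0,1}" "e i \<in> {0,1}" "d i \<ge> 0"
      using i assms eb unfolding binvec_def by auto
    thus "(c i + d i * \<delta> i + d i * e2 i) * (x i - y i)
        \<le> (c i + d i * \<delta> i + d i * e i) * (x i - y i)"
      by (auto simp: e2_def algebra_simps)
  qed
  hence "\<forall>e'\<in>F. f e2 \<le> f e'" using opt by fastforce
  moreover have "\<forall>i\<in>{1..n}. e2 i + x i \<le> 1"
  proof
    fix i assume i: "i \<in> {1..n}"
    have "x i \<in> {0,1}" "e i \<in> {0,1}" using i eb assms(1) unfolding binvec_def by auto
    thus "e2 i + x i \<le> 1" unfolding e2_def by auto
  qed
  ultimately show ?thesis using e2F unfolding F_def f_def by blast
qed

end
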